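(* Let $I$ be an instance of SPA-S and let $\mathcal{M}$ be the set of all stable matchings of $I$. The student-oriented dominance relation $\preceq$ is a partial order (reflexive, anti-symmetric and transitive) on $\mathcal{M}$.
   Context: An instance $I$ of SPA-S consists of a finite set $\mathcal{S}$ of students, a finite set $\mathcal{P}$ of projects and a finite set $\mathcal{L}$ of lecturers. Each student $s_i$ ranks a subset $A_i\subseteq\mathcal{P}$ (its acceptable projects) in strict order. Each project is offered by exactly one lecturer; lecturer $l_k$ offers a nonempty set $P_k\subseteq\mathcal{P}$, the $P_k$ partitioning $\mathcal{P}$. Each lecturer $l_k$ ranks in strict order the students who find at least one project of $P_k$ acceptable. Projects have capacities $c_j\in\mathbb{Z}^+$, lecturers have capacities $d_k\in\mathbb{Z}^+$ with $\max\{c_j:p_j\in P_k\}\le d_k\le\sum\{c_j:p_j\in P_k\}$. A pair $(s_i,p_j)$, $p_j$ offered by $l_k$, is acceptable if $p_j\in A_i$ and $s_i$ is on $l_k$'s list. A matching $M$ is a set of acceptable pairs with each student in at most one pair, $|M(p_j)|\le c_j$, $|M(l_k)|\le d_k$, where $M(s_i)$, $M(p_j)$, $M(l_k)$ denote the project of $s_i$, the students assigned to $p_j$, and the students assigned to projects of $l_k$. Undersubscribed/full means fewer than/exactly capacity many assigned students. An acceptable pair $(s_i,p_j)\notin M$ ($p_j$ offered by $l_k$) blocks $M$ if ($s_i$ is unassigned or prefers $p_j$ to $M(s_i)$) and one of: (P1) $p_j$ and $l_k$ undersubscribed; (P2) $p_j$ undersubscribed, $l_k$ full, $s_i\in M(l_k)$;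 (P3) $p_j$ undersubscribed, $l_k$ full, $l_k$ prefers $s_i$ to the worst student of $M(l_k)$; (P4) $p_j$ full and $l_k$ prefers $s_i$ to the worst student of $M(p_j)$. $M$ is stable if it has no blocking pair. A student prefers $M$ to $M'$ if assigned in both and prefers $M(s_i)$ to $M'(s_i)$; is indifferent if unassigned in both or $M(s_i)=M'(s_i)$. $M\preceq M'$ iff every student prefers $M$ to $M'$ or is indifferent. It is known that exactly the same students are unassigned in all stable matchings of $I$. *)

theory Defs
  imports Main
begin

text \<open>An instance of SPA-S. Preferences are strict relations: (p,q) \<in> spref I s means
  student s prefers p to q; (s,t) \<in> lpref I l means lecturer l prefers s to t.\<close>

record ('s, 'p, 'l) spa =
  students  :: "'s set"
  projects  :: "'p set"
  lecturers :: "'l set"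
  acc       :: "'s \<Rightarrow> 'p set"
  spref     :: "'s \<Rightarrow> ('p \<times> 'p) set"
  offer     :: "'p \<Rightarrow> 'l"
  lpref     :: "'l \<Rightarrow> ('s \<times> 's) set"
  pcap      :: "'p \<Rightarrow> nat"
  lcap      :: "'l \<Rightarrow> nat"

definition offered :: "('s, 'p, 'l) spa \<Rightarrow> 'l \<Rightarrow> 'p set" where
  "offered I l = {p \<in> projects I. offer I p = l}"

definition llist :: "('s, 'p, 'l) spa \<Rightarrow> 'l \<Rightarrow> 's set" where
  "llist I l = {s \<in> students I. acc I s \<inter> offered I l \<noteq> {}}"

definition spa_instance :: "('s, 'p, 'l) spa \<Rightarrow> bool" where
  "spa_instance I \<longleftrightarrow>
     finite (students I) \<and> finite (projects I) \<and> finite (lecturers I) \<and>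
     (\<forall>s \<in> students I. acc I s \<subseteq> projects I \<and>
        strict_linear_order_on (acc I s) (spref I s) \<and> spref I s \<subseteq> acc I s \<times> acc I s) \<and>
     (\<forall>p \<in> projects I. offer I p \<in> lecturers I \<and> pcap I p > 0) \<and>
     (\<forall>l \<in> lecturers I. offered I l \<noteq> {} \<and>
        strict_linear_order_on (llist I l) (lpref I l) \<and> lpref I l \<subseteq> llist I l \<times> llist I l \<and>
        lcap I l > 0 \<and>
        Max (pcap I ` offered I l) \<le> lcap I l \<and> lcap I l \<le> (\<Sum>p \<in> offered I l. pcap I p))"

definition acceptable :: "('s, 'p, 'l) spa \<Rightarrow> 's \<Rightarrow> 'p \<Rightarrow> bool" where
  "acceptable I s p \<longleftrightarrow> s \<in> students I \<and> p \<in> projects I \<and> p \<in> acc I s \<and> s \<in> llist I (offer I p)"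

definition Mstud :: "('s \<times> 'p) set \<Rightarrow> 's \<Rightarrow> 'p option" where
  "Mstud M s = (if \<exists>p. (s, p) \<in> M then Some (THE p. (s, p) \<in> M) else None)"

definition Mproj :: "('s \<times> 'p) set \<Rightarrow> 'p \<Rightarrow> 's set" where
  "Mproj M p = {s. (s, p) \<in> M}"

definition Mlect :: "('s, 'p, 'l) spa \<Rightarrow> ('s \<times> 'p) set \<Rightarrow> 'l \<Rightarrow> 's set" where
  "Mlect I M l = {s. \<exists>p. (s, p) \<in> M \<and> offer I p = l}"

definition matching :: "('s, 'p, 'l) spa \<Rightarrow> ('s \<times> 'p) set \<Rightarrow> bool" where
  "matching I M \<longleftrightarrow>
     (\<forall>(s, p) \<in> M. acceptable I s p) \<and>
     (\<forall>s p q. (s, p) \<in> M \<longrightarrow> (s, q) \<in> M \<longrightarrow> p = q) \<and>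
     (\<forall>p \<in> projects I. card (Mproj M p) \<le> pcap I p) \<and>
     (\<forall>l \<in> lecturers I. card (Mlect I M l) \<le> lcap I l)"

definition prefers_to_worst :: "('s, 'p, 'l) spa \<Rightarrow> 'l \<Rightarrow> 's \<Rightarrow> 's set \<Rightarrow> bool" where
  "prefers_to_worst I l s T \<longleftrightarrow>
     (\<exists>w \<in> T. (\<forall>w' \<in> T. w' = w \<or> (w', w) \<in> lpref I l) \<and> (s, w) \<in> lpref I l)"

definition blocking :: "('s, 'p, 'l) spa \<Rightarrow> ('s \<times> 'p) set \<Rightarrow> 's \<Rightarrow> 'p \<Rightarrow> bool" where
  "blocking I M s p \<longleftrightarrow>
     (let l = offer I p in
      acceptable I s p \<and> (s, p) \<notin> M \<and>
      (Mstud M s = None \<or> (\<exists>q. Mstud M s = Some q \<and> (p, q) \<in> spref I s)) \<and>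
      ((card (Mproj M p) < pcap I p \<and> card (Mlect I M l) < lcap I l) \<or>
       (card (Mproj M p) < pcap I p \<and> card (Mlect I M l) = lcap I l \<and> s \<in> Mlect I M l) \<or>
       (card (Mproj M p) < pcap I p \<and> card (Mlect I M l) = lcap I l \<and>
          prefers_to_worst I l s (Mlect I M l)) \<or>
       (card (Mproj M p) = pcap I p \<and> prefers_to_worst I l s (Mproj M p))))"

definition stable :: "('s, 'p, 'l) spa \<Rightarrow> ('s \<times> 'p) set \<Rightarrow> bool" where
  "stable I M \<longleftrightarrow> matching I M \<and> (\<forall>s p. \<not> blocking I M s p)"

definition stable_matchings :: "('s, 'p, 'l) spa \<Rightarrow> ('s \<times> 'p) set set" where
  "stable_matchings I = {M. stable I M}"

definition stud_prefers :: "('s, 'p, 'l) spa \<Rightarrow> 's \<Rightarrow> ('s \<times> 'p) set \<Rightarrow> ('s \<times> 'p) set \<Rightarrow> bool" where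
  "stud_prefers I s M M' \<longleftrightarrow>
     (\<exists>p q. Mstud M s = Some p \<and> Mstud M' s = Some q \<and> (p, q) \<in> spref I s)"

definition stud_indifferent :: "'s \<Rightarrow> ('s \<times> 'p) set \<Rightarrow> ('s \<times> 'p) set \<Rightarrow> bool" where
  "stud_indifferent s M M' \<longleftrightarrow> Mstud M s = Mstud M' s"

definition dominates :: "('s, 'p, 'l) spa \<Rightarrow> ('s \<times> 'p) set \<Rightarrow> ('s \<times> 'p) set \<Rightarrow> bool" where
  "dominates I M M' \<longleftrightarrow> (\<forall>s \<in> students I. stud_prefers I s M M' \<or> stud_indifferent s M M')"

definition dom_rel :: "('s, 'p, 'l) spa \<Rightarrow> (('s \<times> 'p) set \<times> ('s \<times> 'p) set) set" where
  "dom_rel I = {(M, M'). M \<in> stable_matchings I \<and> M' \<in> stable_matchings I \<and> dominates I M M'}"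

end

theory Submission
  imports Defs
begin

lemma Mstud_Some:
  assumes "matching I M" "(s, p) \<in> M"
  shows "Mstud M s = Some p"
proof -
  have "(THE p. (s, p) \<in> M) = p"
    using assms unfolding matching_def by (intro the_equality) blast+
  thus ?thesis using assms(2) unfolding Mstud_def by auto
qed

lemma Mstud_SomeD:
  assumes "matching I M" "Mstud M s = Some p"
  shows "(s, p) \<in> M"
proof -
  obtain q where q: "(s, q) \<in> M" using assms(2) unfolding Mstud_def by (auto split: if_splits)
  thus ?thesis using Mstud_Some[OF assms(1) q] assms(2) by simp
qed

lemma spref_props:
  assumes "spa_instance I" "s \<in> students I"
  shows "trans (spref I s)" "irrefl (spref I s)"
  using assms unfolding spa_instance_def strict_linear_order_on_def by auto

lemma stud_in:
  assumes "matching I M" "(s, p) \<in> M"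
  shows "s \<in> students I"
  using assms unfolding matching_def acceptable_def by auto

theorem proposition1:
  fixes I :: "('s, 'p, 'l) spa"
  assumes "spa_instance I"
  shows "partial_order_on (stable_matchings I) (dom_rel I)"
  unfolding partial_order_on_def preorder_on_def
proof (intro conjI)
  show "dom_rel I \<subseteq> stable_matchings I \<times> stable_matchings I"
    unfolding dom_rel_def by auto
  show "refl_on (stable_matchings I) (dom_rel I)"
    unfolding refl_on_def dom_rel_def dominates_def stud_indifferent_def by auto
  show "trans (dom_rel I)"
  proof (rule transI)
    fix x y z assume xy: "(x, y) \<in> dom_rel I" and yz: "(y, z) \<in> dom_rel I"
    have "dominates I x z" unfolding dominates_def
    proof
      fix s assume s: "s \<in> students I"
      have t: "trans (spref I s)" using spref_props[OF assms s] by auto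
      have a: "stud_prefers I s x y \<or> stud_indifferent s x y"
        using xy s unfolding dom_rel_def dominates_def by auto
      have b: "stud_prefers I s y z \<or> stud_indifferent s y z"
        using yz s unfolding dom_rel_def dominates_def by auto
      from a b t show "stud_prefers I s x z \<or> stud_indifferent s x z"
        unfolding stud_prefers_def stud_indifferent_def
        by (auto dest: transD)
    qed
    thus "(x, z) \<in> dom_rel I" using xy yz unfolding dom_rel_def by auto
  qed
  show "antisym (dom_rel I)"
  proof (rule antisymI)
    fix x y assume xy: "(x, y) \<in> dom_rel I" and yx: "(y, x) \<in> dom_rel I"
    have mx: "matching I x" and my: "matching I y"
      using xy unfolding dom_rel_def stable_matchings_def stable_def by auto
    have eq: "Mstud x s = Mstud y s" if s: "s \<in> students I" for s
    proof -
      have t: "trans (spref I s)" and i: "irrefl (spref I s)" using spref_props[OF assms s] by auto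
      have a: "stud_prefers I s x y \<or> stud_indifferent s x y"
        using xy s unfolding dom_rel_def dominates_def by auto
      have b: "stud_prefers I s y x \<or> stud_indifferent s y x"
        using yx s unfolding dom_rel_def dominates_def by auto
      from a b t i show ?thesis
        unfolding stud_prefers_def stud_indifferent_def irrefl_def
        by (auto dest: transD)
    qed
    show "x = y"
    proof (intro set_eqI iffI)
      fix sp assume "sp \<in> x"
      then obtain s p where sp: "sp = (s, p)" "(s, p) \<in> x" by (cases sp) auto
      have "Mstud y s = Some p" using eq[OF stud_in[OF mx sp(2)]] Mstud_Some[OF mx sp(2)] by simp
      thus "sp \<in> y" using sp Mstud_SomeD[OF my] by simp
    next
      fix sp assume "sp \<in> y"
      then obtain s p where sp: "sp = (s, p)" "(s, p) \<in> y" by (cases sp) auto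
      have "Mstud x s = Some p" using eq[OF stud_in[OF my sp(2)]] Mstud_Some[OF my sp(2)] by simp
      thus "sp \<in> x" using sp Mstud_SomeD[OF mx] by simp
    qed
  qed
qed

end
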